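(* Let $\vec d=(\vec a,\vec b)$ be a bidegree sequence of length $n$ with $\sum_i a_i=\sum_i b_i=n\bar c$, with the entries of $\vec a$ in non-increasing order, $m:=\min\vec d$ satisfying $1\le m\le n$, and $\max\vec d\le n$. Suppose there exist an integer $R\in[0..n]$ and a real $\lambda\ge0$ such that $\sum_{i=1}^R a_i=n\lambda$, $\sum_{i=1}^R b_i\le n\lambda$, $\lambda<m$ and $n-n\lambda/m-R\ge1$. Let $M=\max_{i\ge R}\max(a_i,b_i)$ and $k_*=m+\sqrt{m^2+n(\bar c-2m)+Rm}$; let $k=\lceil k_*\rceil$ if $m^2+n(\bar c-2m)+Rm\ge0$ and $k=1$ otherwise. If $$M\le\min\Big(\Big\lfloor\frac{n\bar c-nm-n\lambda+Rm}{k}+m\Big\rfloor,\ n\Big)$$ and either $k\le M$ or $k\le n-n\lambda/m-R$, then $\vec d$ is graphic with loops.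
   Context: A bidegree sequence of length $n$ is a pair $\vec d=(\vec a,\vec b)$ with $\vec a=(a_1,\dots,a_n)\in\mathbb{N}_0^n$ and $\vec b=(b_1,\dots,b_n)\in\mathbb{N}_0^n$. It is graphic with loops if there is an $n\times n$ matrix with entries in $\{0,1\}$ whose $i$th row sum is $a_i$ and whose $i$th column sum is $b_i$ for every $i\in[1..n]$. $\max\vec d$ and $\min\vec d$ denote the maximum and minimum over all $2n$ entries $a_1,\dots,a_n,b_1,\dots,b_n$. The number $\bar c$ (the average degree) is defined by $\sum_i a_i=\sum_i b_i=n\bar c$. For integers $a\le b$, $[a..b]:=\{x\in\mathbb{Z}:a\le x\le b\}$. *)

theory Defs
  imports Complex_Main
begin

text \<open>Bidegree sequences of length n are given by functions a b :: nat => nat,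
  of which only the entries at indices 1..n matter (1-indexed as in the paper).\<close>

definition graphic_with_loops :: "nat \<Rightarrow> (nat \<Rightarrow> nat) \<Rightarrow> (nat \<Rightarrow> nat) \<Rightarrow> bool" where
  "graphic_with_loops n a b \<longleftrightarrow>
     (\<exists>X :: nat \<Rightarrow> nat \<Rightarrow> nat.
        (\<forall>i\<in>{1..n}. \<forall>j\<in>{1..n}. X i j \<in> {0, 1}) \<and>
        (\<forall>i\<in>{1..n}. (\<Sum>j=1..n. X i j) = a i) \<and>
        (\<forall>j\<in>{1..n}. (\<Sum>i=1..n. X i j) = b j))"

definition max_bideg :: "nat \<Rightarrow> (nat \<Rightarrow> nat) \<Rightarrow> (nat \<Rightarrow> nat) \<Rightarrow> nat" where
  "max_bideg n a b = Max (a ` {1..n} \<union> b ` {1..n})"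

definition min_bideg :: "nat \<Rightarrow> (nat \<Rightarrow> nat) \<Rightarrow> (nat \<Rightarrow> nat) \<Rightarrow> nat" where
  "min_bideg n a b = Min (a ` {1..n} \<union> b ` {1..n})"

end

theory Submission
  imports Defs
begin

lemma sum_split_first: "(\<Sum>i=1..Suc p. f i) = f 1 + (\<Sum>i=1..p. f (Suc i :: nat)) " for f :: "nat \<Rightarrow> 'a::comm_monoid_add"
  by (induction p) (simp_all add: add.assoc)

lemma top_set:
  fixes b :: "'c \<Rightarrow> nat"
  assumes "finite C" "t \<le> card C"
  shows "\<exists>S. S \<subseteq> C \<and> card S = t \<and> (\<forall>j\<in>S. \<forall>j'\<in>C - S. b j' \<le> b j)"
  using assms(2)
proof (induction t)
  case 0 then show ?case by auto
next
  case (Suc t)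
  then obtain S where S: "S \<subseteq> C" "card S = t" "\<forall>j\<in>S. \<forall>j'\<in>C - S. b j' \<le> b j" by auto
  have fS: "finite S" using S(1) assms(1) finite_subset by blast
  have ne: "C - S \<noteq> {}"
  proof
    assume "C - S = {}"
    then have "C \<subseteq> S" by auto
    then have "card C \<le> card S" using card_mono fS by blast
    then show False using S(2) Suc.prems by simp
  qed
  have fin: "finite (C - S)" using assms(1) by auto
  obtain x where x: "x \<in> C - S" "\<forall>y\<in>C - S. b y \<le> b x"
  proof -
    have "Max (b ` (C - S)) \<in> b ` (C - S)" using ne fin by (intro Max_in) auto
    then obtain x where "x \<in> C - S" "b x = Max (b ` (C - S))" by auto
    then show ?thesis using that fin by auto
  qed
  show ?case
  proof (intro exI[of _ "insert x S"] conjI)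
    show "insert x S \<subseteq> C" using S x by auto
    show "card (insert x S) = Suc t" using fS x S by auto
    show "\<forall>j\<in>insert x S. \<forall>j'\<in>C - insert x S. b j' \<le> b j" using S x by auto
  qed
qed

lemma gale_ryser:
  fixes C :: "'c set" and b :: "'c \<Rightarrow> nat"
  assumes finC: "finite C"
  shows "(\<forall>i j. 1 \<le> i \<and> i \<le> j \<and> j \<le> p \<longrightarrow> a j \<le> a i) \<Longrightarrow>
    (\<Sum>i=1..p. a i) = (\<Sum>j\<in>C. b j) \<Longrightarrow>
    (\<forall>r\<in>{1..p}. (\<Sum>i=1..r. a i) \<le> (\<Sum>j\<in>C. min (b j) r)) \<Longrightarrow>
    \<exists>X::nat\<Rightarrow>'c\<Rightarrow>nat. (\<forall>i\<in>{1..p}. \<forall>j\<in>C. X i j \<in> {0,1}) \<and>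
       (\<forall>i\<in>{1..p}. (\<Sum>j\<in>C. X i j) = a i) \<and> (\<forall>j\<in>C. (\<Sum>i=1..p. X i j) = b j)"
proof (induction p arbitrary: a b)
  case 0
  then have "\<forall>j\<in>C. b j = 0" using finC by simp
  then show ?case by (intro exI[of _ "\<lambda>_ _. 0"]) auto
next
  case (Suc p)
  note sorted = Suc.prems(1) and sums = Suc.prems(2) and cond = Suc.prems(3)
  have c1: "a 1 \<le> (\<Sum>j\<in>C. min (b j) 1)" using cond[rule_format, of 1] by simp
  also have "\<dots> \<le> (\<Sum>j\<in>C. 1)" by (intro sum_mono) auto
  finally have a1C: "a 1 \<le> card C" by simp
  obtain S where S: "S \<subseteq> C" "card S = a 1" "\<forall>j\<in>S. \<forall>j'\<in>C - S. b j' \<le> b j"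
    using top_set[OF finC a1C] by blast
  have fS: "finite S" using S(1) finC finite_subset by blast
  have Spos: "\<forall>j\<in>S. 1 \<le> b j"
  proof (rule ccontr)
    assume "\<not> (\<forall>j\<in>S. 1 \<le> b j)"
    then obtain j0 where j0: "j0 \<in> S" "b j0 = 0" by auto
    then have zero: "\<forall>j'\<in>C - S. b j' = 0" using S(3) by fastforce
    have "(\<Sum>j\<in>C. min (b j) 1) = (\<Sum>j\<in>S. min (b j) 1) + (\<Sum>j\<in>C - S. min (b j) 1)"
      using S(1) finC by (metis sum.subset_diff add.commute)
    also have "(\<Sum>j\<in>C - S. min (b j) 1) = 0" using zero by simp
    also have "(\<Sum>j\<in>S. min (b j) 1) = (\<Sum>j\<in>S - {j0}. min (b j) 1)"
      using j0 fS by (simp add: sum.remove)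
    also have "\<dots> \<le> (\<Sum>j\<in>S - {j0}. 1)" by (intro sum_mono) auto
    also have "\<dots> = card S - 1" using j0 fS by simp
    finally have "a 1 \<le> card S - 1" using c1 by simp
    moreover have "card S \<ge> 1" using j0 fS by (metis One_nat_def Suc_leI card_gt_0_iff empty_iff)
    ultimately show False using S(2) by simp
  qed
  define a' where "a' i = a (Suc i)" for i
  define b' where "b' j = b j - (if j \<in> S then 1 else 0)" for j
  have b'eq: "b' j + (if j \<in> S then 1 else 0) = b j" if "j \<in> C" for j
    using Spos by (auto simp: b'_def)
  have h1: "\<forall>i j. 1 \<le> i \<and> i \<le> j \<and> j \<le> p \<longrightarrow> a' j \<le> a' i"
    using sorted by (auto simp: a'_def)
  have sumb: "(\<Sum>j\<in>C. b' j) + card S = (\<Sum>j\<in>C. b j)"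
  proof -
    have "(\<Sum>j\<in>C. b' j) + card S = (\<Sum>j\<in>C. b' j) + (\<Sum>j\<in>C. (if j \<in> S then 1 else 0))"
      using S(1) finC by (simp add: sum.If_cases Int_absorb1)
    also have "\<dots> = (\<Sum>j\<in>C. b' j + (if j \<in> S then 1 else 0))" by (simp add: sum.distrib)
    also have "\<dots> = (\<Sum>j\<in>C. b j)" using b'eq by (intro sum.cong) auto
    finally show ?thesis .
  qed
  have h2: "(\<Sum>i=1..p. a' i) = (\<Sum>j\<in>C. b' j)"
    using sums sumb S(2) sum_split_first[of a p] by (simp add: a'_def)
  have h3: "\<forall>r\<in>{1..p}. (\<Sum>i=1..r. a' i) \<le> (\<Sum>j\<in>C. min (b' j) r)"
  proof
    fix r assume r: "r \<in> {1..p}"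
    show "(\<Sum>i=1..r. a' i) \<le> (\<Sum>j\<in>C. min (b' j) r)"
    proof (cases "\<exists>j\<in>C - S. r + 1 \<le> b j")
      case True
      then obtain j1 where j1: "j1 \<in> C - S" "r + 1 \<le> b j1" by auto
      have "\<forall>j\<in>S. r + 1 \<le> b j" using S(3) j1 le_trans by blast
      then have eqr: "\<forall>j\<in>S. min (b' j) r = r" by (auto simp: b'_def)
      have "(\<Sum>i=1..r. a' i) \<le> (\<Sum>i=1..r. a 1)"
        using sorted r by (intro sum_mono) (auto simp: a'_def)
      also have "\<dots> = (\<Sum>j\<in>S. min (b' j) r)" using eqr S(2) by simp
      also have "\<dots> \<le> (\<Sum>j\<in>C. min (b' j) r)" using S(1) finC by (intro sum_mono2) auto
      finally show ?thesis .
    next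
      case False
      then have small: "\<forall>j\<in>C - S. b j \<le> r" by force
      have pt: "min (b' j) r + (if j \<in> S then 1 else 0) = min (b j) (r+1)" if "j \<in> C" for j
      proof (cases "j \<in> S")
        case True then show ?thesis using Spos by (auto simp: b'_def)
      next
        case False then have "b j \<le> r" using small that by blast
        then show ?thesis using False by (auto simp: b'_def)
      qed
      have "(\<Sum>j\<in>C. min (b' j) r) + a 1 = (\<Sum>j\<in>C. min (b' j) r) + (\<Sum>j\<in>C. (if j \<in> S then 1 else 0))"
        using S finC by (simp add: sum.If_cases Int_absorb1)
      also have "\<dots> = (\<Sum>j\<in>C. min (b j) (r+1))" unfolding sum.distrib[symmetric] using pt by (intro sum.cong) auto
      also have "\<dots> \<ge> (\<Sum>i=1..Suc r. a i)" using cond[rule_format, of "Suc r"] r by simp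
      finally have "(\<Sum>i=1..Suc r. a i) \<le> (\<Sum>j\<in>C. min (b' j) r) + a 1" .
      then show ?thesis using sum_split_first[of a r] by (simp add: a'_def)
    qed
  qed
  obtain X' where X': "\<forall>i\<in>{1..p}. \<forall>j\<in>C. X' i j \<in> {0,1}" "\<forall>i\<in>{1..p}. (\<Sum>j\<in>C. X' i j) = a' i"
      "\<forall>j\<in>C. (\<Sum>i=1..p. X' i j) = b' j"
    using Suc.IH[OF h1 h2 h3] by blast
  define X where "X i j = (if i = 1 then (if j \<in> S then 1 else 0) else X' (i - 1) j)" for i j
  show ?case
  proof (intro exI[of _ X] conjI ballI)
    fix i j assume ij: "i \<in> {1..Suc p}" "j \<in> C"
    show "X i j \<in> {0,1}"
    proof (cases "i = 1")
      case False
      then have "i - 1 \<in> {1..p}" using ij by auto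
      then show ?thesis using X'(1) ij False by (simp add: X_def)
    qed (simp add: X_def)
  next
    fix i assume i: "i \<in> {1..Suc p}"
    show "(\<Sum>j\<in>C. X i j) = a i"
    proof (cases "i = 1")
      case True
      then show ?thesis using S finC by (simp add: X_def sum.If_cases Int_absorb1)
    next
      case False
      then have "i - 1 \<in> {1..p}" using i by auto
      then show ?thesis using X'(2) False i by (simp add: X_def a'_def)
    qed
  next
    fix j assume j: "j \<in> C"
    have "(\<Sum>i=1..Suc p. X i j) = X 1 j + (\<Sum>i=1..p. X (Suc i) j)" by (rule sum_split_first)
    also have "(\<Sum>i=1..p. X (Suc i) j) = (\<Sum>i=1..p. X' i j)" by (simp add: X_def)
    also have "\<dots> = b' j" using X'(3) j by simp
    finally show "(\<Sum>i=1..Suc p. X i j) = b j" using b'eq[OF j] by (simp add: X_def)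
  qed
qed

lemma interp:
  fixes m b r X :: real
  assumes "m \<le> b" "b \<le> X" "m \<le> r" "r \<le> X" "m < X"
  shows "m + (b - m) * (r - m) / (X - m) \<le> min b r"
proof (cases "b \<le> r")
  case True
  have "(b - m) * (r - m) \<le> (b - m) * (X - m)" using assms by (intro mult_left_mono) auto
  then have "(b - m) * (r - m) / (X - m) \<le> b - m" using assms by (simp add: divide_le_eq)
  then show ?thesis using True by simp
next
  case False
  have "(b - m) * (r - m) \<le> (X - m) * (r - m)" using assms by (intro mult_right_mono) auto
  then have "(b - m) * (r - m) / (X - m) \<le> r - m" using assms by (simp add: divide_le_eq mult.commute)
  then show ?thesis using False by simp
qed

lemma interp_sum:
  fixes b :: "nat \<Rightarrow> nat" and m r :: nat and X :: real
  assumes "finite A" "\<forall>j\<in>A. m \<le> b j \<and> real (b j) \<le> X" "m \<le> r" "real r \<le> X" "real m < X"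
  shows "real (card A) * m + (real r - m) / (X - m) * (\<Sum>j\<in>A. (real (b j) - m)) \<le> (\<Sum>j\<in>A. real (min (b j) r))"
proof -
  have "real (card A) * m + (real r - m) / (X - m) * (\<Sum>j\<in>A. (real (b j) - m))
      = (\<Sum>j\<in>A. m + (real (b j) - m) * (real r - m) / (X - m))"
    by (simp add: sum.distrib sum_distrib_left mult.commute sum_divide_distrib)
  also have "\<dots> \<le> (\<Sum>j\<in>A. min (real (b j)) (real r))"
    using assms by (intro sum_mono interp) auto
  also have "\<dots> = (\<Sum>j\<in>A. real (min (b j) r))" by (simp add: of_nat_min)
  finally show ?thesis .
qed

lemma split_sum:
  fixes f :: "nat \<Rightarrow> 'a::comm_monoid_add"
  assumes "R \<le> n"
  shows "(\<Sum>i=1..n. f i) = (\<Sum>i=1..R. f i) + (\<Sum>i=Suc R..n. f i)"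
proof -
  have "{1..n} = {1..R} \<union> {Suc R..n}" using assms by auto
  then show ?thesis by (simp add: sum.union_disjoint[symmetric] ivl_disj_int)
qed

lemma alg1:
  fixes T n m R r k :: real
  assumes "m\<^sup>2 + T - 2*n*m + R*m \<le> (k - m)\<^sup>2" "m \<le> k" "k \<le> r" "0 \<le> R" "0 \<le> m"
  shows "T - (n - r)*m \<le> n*m + k*(r - m)"
proof -
  have "0 \<le> (r - k)*(k - m)" using assms by simp
  moreover have "0 \<le> R*m" using assms by simp
  ultimately show ?thesis using assms(1) by (simp add: power2_eq_square algebra_simps)
qed

lemma alg2:
  fixes T n m R r k M lam :: real
  assumes D: "m\<^sup>2 + T - 2*n*m + R*m \<le> (k - m)\<^sup>2" and km: "m \<le> k" and rk: "r < k" and Rr: "R \<le> r"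
    and R0: "0 \<le> R" and m0: "0 \<le> m"
    and Mb: "k*(M - m) \<le> T - n*lam - (n - R)*m" and alt: "k*m \<le> n*m - n*lam" and k0: "0 < k"
  shows "n*lam + (r - R)*M \<le> n*m + k*(r - m)"
proof -
  define N where "N = n*m - n*lam"
  define E where "E = T - n*lam - (n - R)*m"
  define u where "u = r - R"
  have u0: "0 \<le> u" and uk: "u \<le> k" using Rr R0 rk by (auto simp: u_def)
  have EN: "E \<le> k^2 - 2*k*m + N" using D by (simp add: E_def N_def power2_eq_square algebra_simps)
  have kM: "k*M \<le> k*m + E" using Mb by (simp add: E_def algebra_simps)
  have "k*(u*M) = u*(k*M)" by simp
  also have "\<dots> \<le> u*(k*m + E)" using kM u0 by (intro mult_left_mono)
  also have "\<dots> \<le> u*(k^2 - k*m + N)" using EN u0 by (intro mult_left_mono) auto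
  finally have s1: "k*(u*M) \<le> u*(k^2 - k*m + N)" .
  have s2: "u*k*(k-m) - k^2*(r-m) = k*(m*(k-r) - R*(k-m))" by (simp add: u_def power2_eq_square algebra_simps)
  have s3: "k*(m*(k-r) - R*(k-m)) \<le> k*(m*(k-u))"
  proof -
    have "R*(k-m) \<ge> 0" using R0 km by simp
    moreover have "m*(k-r) \<le> m*(k-u)" using m0 R0 by (intro mult_left_mono) (auto simp: u_def)
    ultimately show ?thesis using k0 by (intro mult_left_mono) auto
  qed
  have "(k*m)*(k-u) \<le> N*(k-u)" using alt uk by (intro mult_right_mono) (auto simp: N_def)
  then have s4: "k*(m*(k-u)) \<le> N*(k-u)" by (simp add: mult.assoc)
  have "k*(n*lam + u*M) \<le> k*(n*m + k*(r - m))"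
    using s1 s2 s3 s4 by (simp add: N_def power2_eq_square algebra_simps)
  then show ?thesis using k0 by (simp add: u_def)
qed


locale setting =
  fixes n m R M T :: nat and a b :: "nat \<Rightarrow> nat" and lam :: real
  assumes amin: "\<forall>i\<in>{1..n}. m \<le> a i" and bmin: "\<forall>i\<in>{1..n}. m \<le> b i"
    and amax: "\<forall>i\<in>{1..n}. a i \<le> n" and bmax: "\<forall>i\<in>{1..n}. b i \<le> n"
    and aM: "\<forall>i\<in>{1..n}. R \<le> i \<longrightarrow> a i \<le> M" and bM: "\<forall>i\<in>{1..n}. R \<le> i \<longrightarrow> b i \<le> M"
    and sorted: "\<forall>i j. 1 \<le> i \<and> i \<le> j \<and> j \<le> n \<longrightarrow> a j \<le> a i"
    and sumA: "(\<Sum>i=1..n. a i) = T" and sumB: "(\<Sum>i=1..n. b i) = T"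
    and sumRa: "real (\<Sum>i=1..R. a i) = real n * lam"
    and sumRb: "real (\<Sum>i=1..R. b i) \<le> real n * lam"
    and Rle: "R \<le> n" and lam_lt: "lam < real m" and m1: "1 \<le> m"
begin

lemma case1:
  assumes "1 \<le> r" "r \<le> n" "r \<le> m"
  shows "(\<Sum>i=1..r. a i) \<le> (\<Sum>j=1..n. min (b j) r)"
proof -
  have "(\<Sum>i=1..r. a i) \<le> (\<Sum>i=1..r. n)" using amax assms by (intro sum_mono) auto
  also have "\<dots> = (\<Sum>j=1..n. r)" by simp
  also have "\<dots> = (\<Sum>j=1..n. min (b j) r)"
  proof (intro sum.cong refl)
    fix x assume "x \<in> {1..n}"
    then have "r \<le> b x" using bmin assms(3) le_trans by blast
    then show "r = min (b x) r" by simp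
  qed
  finally show ?thesis .
qed

lemma lhs_bound:
  assumes "r \<le> n"
  shows "real (\<Sum>i=1..r. a i) \<le> real T - (real n - real r) * real m"
proof -
  have "T = (\<Sum>i=1..r. a i) + (\<Sum>i=Suc r..n. a i)" using sumA split_sum[OF assms, of a] by simp
  then have t: "real T = real (\<Sum>i=1..r. a i) + real (\<Sum>i=Suc r..n. a i)" by simp
  have "(\<Sum>i=Suc r..n. m) \<le> (\<Sum>i=Suc r..n. a i)" using amin by (intro sum_mono) auto
  then have "real (\<Sum>i=Suc r..n. m) \<le> real (\<Sum>i=Suc r..n. a i)" by (simp only: of_nat_le_iff)
  moreover have "real (\<Sum>i=Suc r..n. m) = (real n - real r) * real m" using assms by (simp add: of_nat_diff)
  ultimately show ?thesis using t by linarith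
qed

lemma n_pos: "1 \<le> r \<Longrightarrow> r \<le> n \<Longrightarrow> 1 \<le> n" by simp

lemma case2:
  assumes "1 \<le> r" "r \<le> n" "m < r" "r \<le> R"
  shows "(\<Sum>i=1..r. a i) \<le> (\<Sum>j=1..n. min (b j) r)"
proof -
  have "(\<Sum>i=1..r. a i) \<le> (\<Sum>i=1..R. a i)" using assms by (intro sum_mono2) auto
  then have "real (\<Sum>i=1..r. a i) \<le> real n * lam" using sumRa by linarith
  also have "\<dots> < real n * real m" using lam_lt assms by simp
  also have "real n * real m = real (\<Sum>j=1..n. m)" by simp
  also have "(\<Sum>j=1..n. m) \<le> (\<Sum>j=1..n. min (b j) r)" using bmin assms by (intro sum_mono) auto
  finally have "real (\<Sum>i=1..r. a i) < real (\<Sum>j=1..n. min (b j) r)" by simp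
  then show ?thesis by (simp only: of_nat_less_iff)
qed

lemma case3:
  assumes "1 \<le> r" "r \<le> n" "m < r" "real m ^ 2 + real T - 2 * real n * real m + real R * real m < 0"
  shows "(\<Sum>i=1..r. a i) \<le> (\<Sum>j=1..n. min (b j) r)"
proof -
  have mn: "real m < real n" using assms by simp
  have "real n * m + (real r - m) / (real n - m) * (\<Sum>j\<in>{1..n}. (real (b j) - m)) \<le> (\<Sum>j\<in>{1..n}. real (min (b j) r))"
    using interp_sum[where A="{1..n}" and m=m and b=b and r=r and X="real n"] bmin bmax assms by simp
  also have "\<dots> = real (\<Sum>j=1..n. min (b j) r)" by simp
  finally have rh: "real n * m + (real r - m) / (real n - m) * (real T - real n * m) \<le> real (\<Sum>j=1..n. min (b j) r)"
    using sumB by (simp add: sum_subtractf flip: of_nat_sum)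
  have e1: "(real n - m) * m = real n * m - real m ^ 2" by (simp add: algebra_simps power2_eq_square)
  have e2: "real R * real m \<ge> 0" by simp
  have y: "real T - real n * m \<le> (real n - m) * m" using assms(4) e1 e2 by linarith
  have "(real T - real n * m) * (real n - r) \<le> (real n - m) * m * (real n - r)"
    using y assms by (intro mult_right_mono) auto
  then have "(real T - real n * m) - (real n - r) * m \<le> (real r - m) / (real n - m) * (real T - real n * m)"
    using mn by (simp add: field_simps)
  then have "real (\<Sum>i=1..r. a i) \<le> real (\<Sum>j=1..n. min (b j) r)"
    using rh lhs_bound[OF assms(2)] by linarith
  then show ?thesis by (simp only: of_nat_le_iff)
qed

lemma case4:
  assumes "1 \<le> r" "r \<le> n" "m < r" "R < r" "M \<le> r"
  shows "(\<Sum>i=1..r. a i) \<le> (\<Sum>j=1..n. min (b j) r)"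
proof -
  define J where "J = {j\<in>{1..n}. r < b j}"
  have JR: "J \<subseteq> {1..R}"
  proof
    fix j assume "j \<in> J"
    then have j: "j \<in> {1..n}" "r < b j" by (auto simp: J_def)
    have "\<not> R \<le> j"
    proof
      assume "R \<le> j" then have "b j \<le> M" using bM j by auto
      then show False using j assms by simp
    qed
    then show "j \<in> {1..R}" using j by auto
  qed
  have Jsub: "J \<subseteq> {1..n}" by (auto simp: J_def)
  have finJ: "finite J" using Jsub finite_subset by blast
  have rh: "(\<Sum>j=1..n. min (b j) r) = (\<Sum>j\<in>{1..n} - J. b j) + card J * r"
  proof -
    have "(\<Sum>j=1..n. min (b j) r) = (\<Sum>j\<in>{1..n} - J. min (b j) r) + (\<Sum>j\<in>J. min (b j) r)"
      using Jsub by (simp add: sum.subset_diff)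
    also have "(\<Sum>j\<in>{1..n} - J. min (b j) r) = (\<Sum>j\<in>{1..n} - J. b j)"
      by (intro sum.cong) (auto simp: J_def)
    also have "(\<Sum>j\<in>J. min (b j) r) = (\<Sum>j\<in>J. r)"
      by (intro sum.cong) (auto simp: J_def)
    finally show ?thesis by simp
  qed
  have tb: "T = (\<Sum>j\<in>{1..n} - J. b j) + (\<Sum>j\<in>J. b j)"
    using Jsub sumB by (simp add: sum.subset_diff)
  have key: "real (\<Sum>j\<in>J. b j) \<le> real (card J) * r + (real n - r) * m"
  proof (cases "card J \<le> m")
    case True
    have "(\<Sum>j\<in>J. b j) \<le> (\<Sum>j\<in>J. n)" using bmax Jsub by (intro sum_mono) auto
    also have "(\<Sum>j\<in>J. n) = card J * n" by simp
    finally have "real (\<Sum>j\<in>J. b j) \<le> real (card J * n)" by (simp only: of_nat_le_iff)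
    then have "real (\<Sum>j\<in>J. b j) \<le> real (card J) * n" by simp
    moreover have "real (card J) * (real n - r) \<le> real m * (real n - r)"
      using True assms by (intro mult_right_mono) auto
    ultimately show ?thesis by (simp add: algebra_simps)
  next
    case False
    have "(\<Sum>j\<in>J. b j) \<le> (\<Sum>j\<in>{1..R}. b j)" using JR by (intro sum_mono2) auto
    then have "real (\<Sum>j\<in>J. b j) \<le> real n * lam" using sumRb by linarith
    also have "\<dots> \<le> real n * m" using lam_lt by (intro mult_left_mono) auto
    also have "\<dots> = real m * r + (real n - r) * m" by (simp add: algebra_simps)
    also have "\<dots> \<le> real (card J) * r + (real n - r) * m" using False by (intro add_right_mono mult_right_mono) auto
    finally show ?thesis .
  qed
  have "real (\<Sum>i=1..r. a i) \<le> real (\<Sum>j=1..n. min (b j) r)"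
    using lhs_bound[OF assms(2)] key rh tb by simp
  then show ?thesis by (simp only: of_nat_le_iff)
qed

lemma case5:
  fixes k :: real
  assumes "1 \<le> r" "r \<le> n" "m < r" "R < r" "r < M"
    and D: "real m ^ 2 + real T - 2 * real n * real m + real R * real m \<le> (k - real m) ^ 2"
    and km: "real m \<le> k"
    and Mb: "k * (real M - real m) \<le> real T - real n * lam - (real n - real R) * real m"
    and alt: "k * real m \<le> real n * real m - real n * lam"
  shows "(\<Sum>i=1..r. a i) \<le> (\<Sum>j=1..n. min (b j) r)"
proof -
  have k0: "0 < k" using km m1 by simp
  have Rn: "R \<le> n" using assms by simp
  have mM: "real m < real M" using assms by simp
  have p1: "real R * m \<le> real (\<Sum>j=1..R. min (b j) r)"
  proof -
    have "(\<Sum>j=1..R. m) \<le> (\<Sum>j=1..R. min (b j) r)" using bmin assms by (intro sum_mono) auto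
    then have "real (\<Sum>j=1..R. m) \<le> real (\<Sum>j=1..R. min (b j) r)" by (simp only: of_nat_le_iff)
    then show ?thesis by simp
  qed
  have "real (card {Suc R..n}) * m + (real r - m) / (real M - m) * (\<Sum>j\<in>{Suc R..n}. (real (b j) - m))
      \<le> (\<Sum>j\<in>{Suc R..n}. real (min (b j) r))"
    using bmin bM assms by (intro interp_sum) auto
  moreover have c: "real (card {Suc R..n}) = real n - R" using Rn by simp
  moreover have ss: "(\<Sum>j\<in>{Suc R..n}. (real (b j) - m)) = real (\<Sum>j=Suc R..n. b j) - (real n - R) * m"
    using Rn by (simp add: sum_subtractf)
  moreover have s2: "(\<Sum>j\<in>{Suc R..n}. real (min (b j) r)) = real (\<Sum>j=Suc R..n. min (b j) r)" by simp
  ultimately have p2: "(real n - R) * m + (real r - m) / (real M - m) * (real (\<Sum>j=Suc R..n. b j) - (real n - R) * m)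
      \<le> real (\<Sum>j=Suc R..n. min (b j) r)" by metis
  have "T = (\<Sum>j=1..R. b j) + (\<Sum>j=Suc R..n. b j)" using split_sum[OF Rn, of b] sumB by simp
  then have "real T = real (\<Sum>j=1..R. b j) + real (\<Sum>j=Suc R..n. b j)" by (metis of_nat_add)
  then have bs: "real (\<Sum>j=Suc R..n. b j) \<ge> real T - real n * lam" using sumRb by linarith
  have Eq: "k * (real M - m) \<le> real (\<Sum>j=Suc R..n. b j) - (real n - R) * m" using Mb bs by linarith
  have "k * (real r - m) = (real r - m) / (real M - m) * (k * (real M - m))" using mM by simp
  also have "\<dots> \<le> (real r - m) / (real M - m) * (real (\<Sum>j=Suc R..n. b j) - (real n - R) * m)"
    using Eq assms mM by (intro mult_left_mono) auto
  finally have p3: "k * (real r - m) \<le> (real r - m) / (real M - m) * (real (\<Sum>j=Suc R..n. b j) - (real n - R) * m)" .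
  have "(\<Sum>j=1..n. min (b j) r) = (\<Sum>j=1..R. min (b j) r) + (\<Sum>j=Suc R..n. min (b j) r)"
    by (rule split_sum[OF Rn])
  then have sp: "real (\<Sum>j=1..n. min (b j) r) = real (\<Sum>j=1..R. min (b j) r) + real (\<Sum>j=Suc R..n. min (b j) r)"
    by (metis of_nat_add)
  have ee: "real R * m + (real n - R) * m = real n * m" by (simp add: algebra_simps)
  have rhs: "real n * m + k * (real r - m) \<le> real (\<Sum>j=1..n. min (b j) r)"
    using p1 p2 p3 sp ee by linarith
  have lhs: "real (\<Sum>i=1..r. a i) \<le> real n * m + k * (real r - m)"
  proof (cases "k \<le> real r")
    case True
    have "real R \<ge> 0" "real m \<ge> 0" by simp_all
    then have "real T - (real n - real r) * real m \<le> real n * real m + k * (real r - real m)"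
      using alg1[OF D km True] by blast
    then show ?thesis using lhs_bound[OF assms(2)] by linarith
  next
    case False
    have Rr: "R \<le> r" using assms by simp
    have "(\<Sum>i=Suc R..r. a i) \<le> (\<Sum>i=Suc R..r. M)" using aM assms by (intro sum_mono) auto
    then have "real (\<Sum>i=Suc R..r. a i) \<le> real (\<Sum>i=Suc R..r. M)" by (simp only: of_nat_le_iff)
    then have "real (\<Sum>i=Suc R..r. a i) \<le> (real r - R) * M" using Rr by (simp add: of_nat_diff)
    moreover have "(\<Sum>i=1..r. a i) = (\<Sum>i=1..R. a i) + (\<Sum>i=Suc R..r. a i)"
      by (rule split_sum[OF Rr])
    then have "real (\<Sum>i=1..r. a i) = real (\<Sum>i=1..R. a i) + real (\<Sum>i=Suc R..r. a i)"
      by (metis of_nat_add)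
    ultimately have "real (\<Sum>i=1..r. a i) \<le> real n * lam + (real r - R) * M"
      using sumRa by linarith
    also have "\<dots> \<le> real n * m + k * (real r - m)"
    proof -
      have h: "real r < k" "real R \<le> real r" "0 \<le> real R" "0 \<le> real m" using False Rr by auto
      show ?thesis using alg2[OF D km h Mb alt k0] .
    qed
    finally show ?thesis .
  qed
  have "real (\<Sum>i=1..r. a i) \<le> real (\<Sum>j=1..n. min (b j) r)" using lhs rhs by linarith
  then show ?thesis by (simp only: of_nat_le_iff)
qed


lemma key:
  fixes k :: real
  assumes r: "1 \<le> r" "r \<le> n"
    and Dc: "0 \<le> real m ^ 2 + real T - 2 * real n * real m + real R * real m \<Longrightarrow>
       real m ^ 2 + real T - 2 * real n * real m + real R * real m \<le> (k - real m) ^ 2 \<and> real m \<le> k \<and>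
       k * (real M - real m) \<le> real T - real n * lam - (real n - real R) * real m \<and>
       k * real m \<le> real n * real m - real n * lam"
  shows "(\<Sum>i=1..r. a i) \<le> (\<Sum>j=1..n. min (b j) r)"
proof -
  consider "r \<le> m" | "m < r" "r \<le> R" | "m < r" "R < r" "real m ^ 2 + real T - 2 * real n * real m + real R * real m < 0"
    | "m < r" "R < r" "M \<le> r" | "m < r" "R < r" "r < M" "0 \<le> real m ^ 2 + real T - 2 * real n * real m + real R * real m"
    by linarith
  then show ?thesis
  proof cases
    case 1 then show ?thesis using case1 r by blast
  next
    case 2 then show ?thesis using case2 r by blast
  next
    case 3 then show ?thesis using case3 r by blast
  next
    case 4 then show ?thesis using case4 r by blast
  next
    case 5 then show ?thesis using case5[OF r 5(1,2,3)] Dc by blast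
  qed
qed

end

theorem corollary5:
  fixes n :: nat and a b :: "nat \<Rightarrow> nat" and cbar :: real
    and R :: nat and lam :: real and M m :: nat and D :: real and k :: int
  assumes sum_a: "real (\<Sum>i=1..n. a i) = real n * cbar"
    and sum_b: "real (\<Sum>i=1..n. b i) = real n * cbar"
    and nonincr: "\<forall>i j. 1 \<le> i \<and> i \<le> j \<and> j \<le> n \<longrightarrow> a j \<le> a i"
    and m_ge: "1 \<le> min_bideg n a b" and m_le: "min_bideg n a b \<le> n"
    and max_le: "max_bideg n a b \<le> n"
    and R_le: "R \<le> n"
    and lam_ge: "lam \<ge> 0"
    and sumR_a: "real (\<Sum>i=1..R. a i) = real n * lam"
    and sumR_b: "real (\<Sum>i=1..R. b i) \<le> real n * lam"
    and lam_lt: "lam < real (min_bideg n a b)"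
    and gap: "real n - real n * lam / real (min_bideg n a b) - real R \<ge> 1"
    and M_def: "M = Max {max (a i) (b i) | i. i \<in> {1..n} \<and> R \<le> i}"
    and m_def: "m = min_bideg n a b"
    and D_def: "D = real m ^ 2 + real n * (cbar - 2 * real m) + real R * real m"
    and k_def: "k = (if D \<ge> 0 then \<lceil>real m + sqrt D\<rceil> else (1::int))"
    and M_bound: "int M \<le> min \<lfloor>(real n * cbar - real n * real m - real n * lam + real R * real m) / real_of_int k + real m\<rfloor> (int n)"
    and alt: "k \<le> int M \<or> real_of_int k \<le> real n - real n * lam / real m - real R"
  shows "graphic_with_loops n a b"
proof -
  define T where "T = (\<Sum>i=1..n. a i)"
  have sumB: "(\<Sum>i=1..n. b i) = T" using sum_a sum_b unfolding T_def by (metis of_nat_eq_iff)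
  have Tc: "real T = real n * cbar" using sum_a T_def by simp
  have m1: "1 \<le> m" using m_ge m_def by simp
  have fin: "finite (a ` {1..n} \<union> b ` {1..n})" by simp
  have amin: "\<forall>i\<in>{1..n}. m \<le> a i" and bmin: "\<forall>i\<in>{1..n}. m \<le> b i"
    using Min_le[OF fin] unfolding m_def min_bideg_def by auto
  have amax: "\<forall>i\<in>{1..n}. a i \<le> n" and bmax: "\<forall>i\<in>{1..n}. b i \<le> n"
    using Max_ge[OF fin] max_le unfolding max_bideg_def by (meson UnCI image_eqI le_trans)+
  have finM: "finite {max (a i) (b i) | i. i \<in> {1..n} \<and> R \<le> i}" by simp
  have aM: "\<forall>i\<in>{1..n}. R \<le> i \<longrightarrow> a i \<le> M" and bM: "\<forall>i\<in>{1..n}. R \<le> i \<longrightarrow> b i \<le> M"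
  proof (safe)
    fix i assume i: "i \<in> {1..n}" "R \<le> i"
    then have "max (a i) (b i) \<le> M" unfolding M_def by (intro Max_ge[OF finM]) blast
    then show "a i \<le> M" "b i \<le> M" by auto
  qed
  have lam_lt': "lam < real m" using lam_lt m_def by simp
  interpret setting n m R M T a b lam
    using amin bmin amax bmax aM bM nonincr T_def sumB sumR_a sumR_b R_le lam_lt' m1
    by unfold_locales auto
  define Dv where "Dv = real m ^ 2 + real T - 2 * real n * real m + real R * real m"
  have DDv: "D = Dv" unfolding D_def Dv_def using Tc by (simp add: algebra_simps)
  have m0: "0 < real m" using m1 by simp
  have Dc: "Dv \<le> (real_of_int k - real m) ^ 2 \<and> real m \<le> real_of_int k \<and>
       real_of_int k * (real M - real m) \<le> real T - real n * lam - (real n - real R) * real m \<and>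
       real_of_int k * real m \<le> real n * real m - real n * lam" if D0: "0 \<le> Dv"
  proof -
    have kk: "real_of_int k \<ge> real m + sqrt D" using D0 DDv k_def by simp
    have sq: "sqrt D \<ge> 0" using D0 DDv by simp
    have km: "real m \<le> real_of_int k" using kk sq by linarith
    have "(sqrt D) ^ 2 \<le> (real_of_int k - real m) ^ 2" using kk sq by (intro power_mono) auto
    then have Dk: "Dv \<le> (real_of_int k - real m) ^ 2" using D0 DDv by simp
    have k0: "0 < real_of_int k" using km m0 by linarith
    have "int M \<le> \<lfloor>(real n * cbar - real n * real m - real n * lam + real R * real m) / real_of_int k + real m\<rfloor>"
      using M_bound by simp
    then have "real M \<le> (real n * cbar - real n * real m - real n * lam + real R * real m) / real_of_int k + real m"
      by (metis floor_le_iff le_floor_iff of_int_of_nat_eq of_int_le_iff)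
    then have "real M - real m \<le> (real T - real n * lam - (real n - real R) * real m) / real_of_int k"
      using Tc by (simp add: algebra_simps)
    then have Mb: "real_of_int k * (real M - real m) \<le> real T - real n * lam - (real n - real R) * real m"
      using k0 by (simp add: field_simps)
    have altk: "real_of_int k * real m \<le> real n * real m - real n * lam"
      using alt
    proof
      assume "k \<le> int M"
      then have kM: "real_of_int k \<le> real M" by linarith
      have "real_of_int k * (real_of_int k - real m) \<le> real_of_int k * (real M - real m)"
        using kM k0 by (intro mult_left_mono) auto
      also have "\<dots> \<le> Dv - real m ^ 2 + (real n * real m - real n * lam)"
        using Mb by (simp add: Dv_def algebra_simps)
      finally have "real_of_int k * (real_of_int k - real m) \<le> (real_of_int k - real m) ^ 2 - real m ^ 2 + (real n * real m - real n * lam)"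
        using Dk by linarith
      then show ?thesis by (simp add: power2_eq_square algebra_simps)
    next
      assume h: "real_of_int k \<le> real n - real n * lam / real m - real R"
      have "real_of_int k * real m \<le> (real n - real n * lam / real m - real R) * real m"
        using h m0 by (intro mult_right_mono) auto
      also have "\<dots> = real n * real m - real n * lam - real R * real m" using m0 by (simp add: field_simps)
      also have "\<dots> \<le> real n * real m - real n * lam" by simp
      finally show ?thesis .
    qed
    show ?thesis using Dk km Mb altk by blast
  qed
  have cond: "\<forall>r\<in>{1..n}. (\<Sum>i=1..r. a i) \<le> (\<Sum>j\<in>{1..n}. min (b j) r)"
  proof
    fix r assume "r \<in> {1..n}"
    then show "(\<Sum>i=1..r. a i) \<le> (\<Sum>j\<in>{1..n}. min (b j) r)"
      using key[of r "real_of_int k"] Dc unfolding Dv_def by auto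
  qed
  obtain X :: "nat \<Rightarrow> nat \<Rightarrow> nat" where
    "(\<forall>i\<in>{1..n}. \<forall>j\<in>{1..n}. X i j \<in> {0,1})" "(\<forall>i\<in>{1..n}. (\<Sum>j\<in>{1..n}. X i j) = a i)"
    "(\<forall>j\<in>{1..n}. (\<Sum>i=1..n. X i j) = b j)"
    using gale_ryser[of "{1..n}" n a b] nonincr T_def sumB cond by auto
  then show ?thesis unfolding graphic_with_loops_def by blast
qed

end
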